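(* Let $\Delta>\delta\geq 1$ be integers, and let $G$ be a graph with $n$ vertices, $m$ edges, maximum degree at most $\Delta$, and minimum degree at least $\delta$. If $\frac{2m}{n}\in\left[\delta,\ \frac{2\Delta\delta}{\Delta+\delta}\right]$, then $$irr(G)\leq 2\Delta m-\delta\Delta n.$$
   Context: All graphs are finite, simple and undirected. For a graph $G$ with edge set $E(G)$ and vertex degrees $d_G(u)$, the irregularity (in the sense of Albertson) is $irr(G)=\sum_{uv\in E(G)}|d_G(u)-d_G(v)|$. *)

theory Defs
  imports Main "HOL-Library.Disjoint_Sets" Complex_Main
begin

definition simple_graph :: "'a set \<Rightarrow> 'a set set \<Rightarrow> bool" where
  "simple_graph V E \<longleftrightarrow> finite V \<and> (\<forall>e\<in>E. e \<subseteq> V \<and> card e = 2)"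

definition degree :: "'a set set \<Rightarrow> 'a \<Rightarrow> nat" where
  "degree E v = card {e\<in>E. v \<in> e}"

definition irr :: "'a set \<Rightarrow> 'a set set \<Rightarrow> int" where
  "irr V E = (\<Sum>e\<in>E. THE k. \<exists>u v. e = {u, v} \<and> k = \<bar>int (degree E u) - int (degree E v)\<bar>)"

end

theory Submission
  imports Defs
begin

lemma edge_term:
  assumes "card e = 2"
  shows "\<exists>u v. e = {u,v} \<and> u \<noteq> v \<and> (THE k. \<exists>u v. e = {u, v} \<and> k = \<bar>int (degree E u) - int (degree E v)\<bar>)
           = \<bar>int (degree E u) - int (degree E v)\<bar>"
proof -
  obtain u v where uv: "e = {u,v}" "u \<noteq> v" using assms by (meson card_2_iff)
  have "(THE k. \<exists>u v. e = {u, v} \<and> k = \<bar>int (degree E u) - int (degree E v)\<bar>)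
           = \<bar>int (degree E u) - int (degree E v)\<bar>"
  proof (rule the_equality)
    show "\<exists>u' v'. e = {u', v'} \<and> \<bar>int (degree E u) - int (degree E v)\<bar> = \<bar>int (degree E u') - int (degree E v')\<bar>"
      using uv by blast
  next
    fix k assume "\<exists>u' v'. e = {u', v'} \<and> k = \<bar>int (degree E u') - int (degree E v')\<bar>"
    then obtain u' v' where "e = {u',v'}" "k = \<bar>int (degree E u') - int (degree E v')\<bar>" by blast
    then show "k = \<bar>int (degree E u) - int (degree E v)\<bar>" using uv
      by (auto simp: doubleton_eq_iff abs_minus_commute)
  qed
  then show ?thesis using uv by blast
qed

lemma pair_bound:
  fixes a b D d :: real
  assumes "d \<ge> 1" "d \<le> a" "a \<le> D" "d \<le> b" "b \<le> D"
  shows "\<bar>a - b\<bar> \<le> D * (a - d) / a + D * (b - d) / b"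
proof -
  have A: "a - d \<le> D * (a - d) / a" and B: "b - d \<le> D * (b - d) / b"
  proof -
    have "a * (a - d) \<le> D * (a - d)" using assms by (intro mult_right_mono) auto
    then show "a - d \<le> D * (a - d) / a" using assms by (simp add: pos_le_divide_eq mult.commute)
    have "b * (b - d) \<le> D * (b - d)" using assms by (intro mult_right_mono) auto
    then show "b - d \<le> D * (b - d) / b" using assms by (simp add: pos_le_divide_eq mult.commute)
  qed
  have "0 \<le> D * (a - d) / a" "0 \<le> D * (b - d) / b" using assms by auto
  then show ?thesis using A B assms by (auto simp: abs_if)
qed

theorem proposition2:
  fixes V :: "'a set" and E :: "'a set set" and \<Delta> \<delta> :: nat
  assumes "simple_graph V E"
    and "V \<noteq> {}"
    and "1 \<le> \<delta>" and "\<delta> < \<Delta>"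
    and "\<forall>v\<in>V. degree E v \<le> \<Delta>"
    and "\<forall>v\<in>V. \<delta> \<le> degree E v"
    and "real \<delta> \<le> 2 * real (card E) / real (card V)"
    and "2 * real (card E) / real (card V) \<le> 2 * real \<Delta> * real \<delta> / (real \<Delta> + real \<delta>)"
  shows "irr V E \<le> 2 * int \<Delta> * int (card E) - int \<delta> * int \<Delta> * int (card V)"
proof -
  have fV: "finite V" and EV: "\<And>e. e \<in> E \<Longrightarrow> e \<subseteq> V" and c2: "\<And>e. e \<in> E \<Longrightarrow> card e = 2"
    using assms(1) by (auto simp: simple_graph_def)
  have fE: "finite E" using fV EV by (meson Pow_iff finite_Pow_iff finite_subset subsetI)
  define h where "h w = real \<Delta> * (real (degree E w) - real \<delta>) / real (degree E w)" for w
  have swap: "(\<Sum>e\<in>E. \<Sum>v\<in>e. g v) = (\<Sum>v\<in>V. real (degree E v) * g v)" for g :: "'a \<Rightarrow> real"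
  proof -
    have "(\<Sum>e\<in>E. \<Sum>v\<in>e. g v) = (\<Sum>e\<in>E. \<Sum>v\<in>{v\<in>V. v \<in> e}. g v)"
      by (rule sum.cong) (use EV in \<open>auto intro!: sum.cong\<close>)
    also have "\<dots> = (\<Sum>v\<in>V. \<Sum>e\<in>{e\<in>E. v \<in> e}. g v)"
      by (rule sum.swap_restrict[OF fE fV])
    also have "\<dots> = (\<Sum>v\<in>V. real (degree E v) * g v)"
      by (simp add: degree_def)
    finally show ?thesis .
  qed
  have "real_of_int (irr V E) \<le> (\<Sum>e\<in>E. \<Sum>v\<in>e. h v)"
    unfolding irr_def of_int_sum
  proof (rule sum_mono)
    fix e assume e: "e \<in> E"
    obtain u v where uv: "e = {u,v}" "u \<noteq> v" and T:
      "(THE k. \<exists>u v. e = {u, v} \<and> k = \<bar>int (degree E u) - int (degree E v)\<bar>)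
           = \<bar>int (degree E u) - int (degree E v)\<bar>"
      using edge_term[OF c2[OF e]] by blast
    have uV: "u \<in> V" and vV: "v \<in> V" using EV[OF e] uv by auto
    have "\<bar>real (degree E u) - real (degree E v)\<bar> \<le> h u + h v"
      unfolding h_def
      by (rule pair_bound) (use assms(3,5,6) uV vV in auto)
    then show "real_of_int (THE k. \<exists>u v. e = {u, v} \<and> k = \<bar>int (degree E u) - int (degree E v)\<bar>)
        \<le> (\<Sum>v\<in>e. h v)" using T uv by simp
  qed
  also have "\<dots> = (\<Sum>v\<in>V. real \<Delta> * (real (degree E v) - real \<delta>))"
    unfolding swap h_def
  proof (rule sum.cong)
    fix v assume "v \<in> V"
    then have "real (degree E v) > 0" using assms(3,6) by force
    then show "real (degree E v) * (real \<Delta> * (real (degree E v) - real \<delta>) / real (degree E v)) =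
         real \<Delta> * (real (degree E v) - real \<delta>)" by simp
  qed simp
  also have "\<dots> = real \<Delta> * ((\<Sum>v\<in>V. real (degree E v)) - real \<delta> * real (card V))"
    by (simp add: sum_distrib_left[symmetric] sum_subtractf)
  also have "(\<Sum>v\<in>V. real (degree E v)) = 2 * real (card E)"
  proof -
    have "(\<Sum>v\<in>V. real (degree E v)) = (\<Sum>e\<in>E. \<Sum>v\<in>e. (1::real))" using swap[of "\<lambda>_. 1"] by simp
    also have "\<dots> = (\<Sum>e\<in>E. 2)" by (rule sum.cong) (auto simp: c2)
    finally show ?thesis by simp
  qed
  finally have "real_of_int (irr V E) \<le> real \<Delta> * (2 * real (card E) - real \<delta> * real (card V))" .
  then have "real_of_int (irr V E) \<le> real_of_int (2 * int \<Delta> * int (card E) - int \<delta> * int \<Delta> * int (card V))"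
    by (simp add: algebra_simps)
  then show ?thesis by linarith
qed

end
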